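(* For every $n\ge2$, the number of acyclic, locally uniform, strongly Holt--Klee unique-sink orientations of the $n$-cube is at least $2^{\binom{n-1}{\lfloor (n-1)/2\rfloor}}$, which is $2^{\Omega(2^n/\sqrt n)}$.
   Context: For $v\in\{0,1\}^n$ and $I\subseteq[n]$, $v\oplus I$ is obtained from $v$ by flipping the coordinates in $I$; $v\oplus i:=v\oplus\{i\}$. The $n$-cube has vertex set $\{0,1\}^n$ and edges $\{v,v\oplus i\}$. A subcube is the induced subgraph on a vertex set $\{v\oplus I: I\subseteq C\}$ for some vertex $v$ and $C\subseteq[n]$; its dimension is $|C|$. A unique-sink orientation (USO) is an orientation of the $n$-cube in which every subcube has exactly one sink; then every subcube also has a unique source. For an orientation $\Phi$ and $F\subseteq[n]$, $\Phi^{(F)}$ is obtained by reversing all edges $\{v,v\oplus i\}$ with $i\in F$. A USO is Holt--Klee if in every subcube of dimension $d$ there are $d$ directed paths from the subcube's source to its sink, pairwise sharing no vertex other than source and sink. A USO $\Phi$ is strongly Holt--Klee if $\Phi^{(F)}$ is Holt--Klee for every $F\subseteq[n]$. A USO is locally uniform if (i) whenever $u_i=u_j=0$, $u\to u\oplus i$ and $u\to u\oplus j$, then $u\oplus i\to u\oplus\{i,j\}$ and $u\oplus j\to u\oplus\{i,j\}$; and (ii) whenever $u_i=u_j=0$, $u\oplus i\to u$ and $u\oplus j\to u$, then $u\oplus\{i,j\}\to u\oplus i$ and $u\oplus\{i,j\}\to u\oplus j$. Acyclic means no directed cycle. *)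

theory Defs
  imports Main
begin

text \<open>Vertices of the n-cube are subsets of {..<n} (a vertex v in {0,1}^n is
identified with the set of coordinates i with v_i = 1).  Flipping a set I of
coordinates is symmetric difference.\<close>

definition flip :: "nat set \<Rightarrow> nat set \<Rightarrow> nat set" where
  "flip v I = (v - I) \<union> (I - v)"

definition cube_vertex :: "nat \<Rightarrow> nat set \<Rightarrow> bool" where
  "cube_vertex n v \<longleftrightarrow> v \<subseteq> {..<n}"

definition cube_edge :: "nat \<Rightarrow> nat set \<Rightarrow> nat set \<Rightarrow> bool" where
  "cube_edge n u v \<longleftrightarrow> cube_vertex n u \<and> (\<exists>i<n. v = flip u {i})"

text \<open>An orientation of the n-cube is a set D of directed edges (u,v), meaning u \<rightarrow> v,
containing exactly one direction of each cube edge.\<close>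

definition orientation :: "nat \<Rightarrow> (nat set \<times> nat set) set \<Rightarrow> bool" where
  "orientation n D \<longleftrightarrow>
     D \<subseteq> {(u, v). cube_edge n u v} \<and>
     (\<forall>u v. cube_edge n u v \<longrightarrow> ((u, v) \<in> D \<longleftrightarrow> (v, u) \<notin> D))"

definition subcube :: "nat set \<Rightarrow> nat set \<Rightarrow> nat set set" where
  "subcube v C = {flip v I | I. I \<subseteq> C}"

definition is_sink :: "(nat set \<times> nat set) set \<Rightarrow> nat set set \<Rightarrow> nat set \<Rightarrow> bool" where
  "is_sink D S w \<longleftrightarrow> w \<in> S \<and> (\<forall>u\<in>S. (w, u) \<notin> D)"

definition is_source :: "(nat set \<times> nat set) set \<Rightarrow> nat set set \<Rightarrow> nat set \<Rightarrow> bool" where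
  "is_source D S w \<longleftrightarrow> w \<in> S \<and> (\<forall>u\<in>S. (u, w) \<notin> D)"

definition USO :: "nat \<Rightarrow> (nat set \<times> nat set) set \<Rightarrow> bool" where
  "USO n D \<longleftrightarrow> orientation n D \<and>
     (\<forall>v C. cube_vertex n v \<longrightarrow> C \<subseteq> {..<n} \<longrightarrow> (\<exists>!w. is_sink D (subcube v C) w))"

definition reorient :: "(nat set \<times> nat set) set \<Rightarrow> nat set \<Rightarrow> (nat set \<times> nat set) set" where
  "reorient D F =
     {(u, v). (u, v) \<in> D \<and> flip u v \<inter> F = {}} \<union>
     {(v, u). (u, v) \<in> D \<and> flip u v \<inter> F \<noteq> {}}"

definition dpath :: "(nat set \<times> nat set) set \<Rightarrow> nat set set \<Rightarrow> nat set \<Rightarrow> nat set \<Rightarrow> nat set list \<Rightarrow> bool" where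
  "dpath D S s t p \<longleftrightarrow> p \<noteq> [] \<and> hd p = s \<and> last p = t \<and> distinct p \<and> set p \<subseteq> S \<and>
     (\<forall>k. Suc k < length p \<longrightarrow> (p ! k, p ! Suc k) \<in> D)"

definition holt_klee :: "nat \<Rightarrow> (nat set \<times> nat set) set \<Rightarrow> bool" where
  "holt_klee n D \<longleftrightarrow> USO n D \<and>
     (\<forall>v C s t. cube_vertex n v \<longrightarrow> C \<subseteq> {..<n} \<longrightarrow>
        is_source D (subcube v C) s \<longrightarrow> is_sink D (subcube v C) t \<longrightarrow>
        (\<exists>P :: nat \<Rightarrow> nat set list.
            (\<forall>i<card C. dpath D (subcube v C) s t (P i)) \<and>
            inj_on P {..<card C} \<and>
            (\<forall>i<card C. \<forall>j<card C. i \<noteq> j \<longrightarrow> set (P i) \<inter> set (P j) \<subseteq> {s, t})))"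

definition strongly_holt_klee :: "nat \<Rightarrow> (nat set \<times> nat set) set \<Rightarrow> bool" where
  "strongly_holt_klee n D \<longleftrightarrow> (\<forall>F. F \<subseteq> {..<n} \<longrightarrow> holt_klee n (reorient D F))"

definition locally_uniform :: "nat \<Rightarrow> (nat set \<times> nat set) set \<Rightarrow> bool" where
  "locally_uniform n D \<longleftrightarrow>
     (\<forall>u i j. cube_vertex n u \<longrightarrow> i < n \<longrightarrow> j < n \<longrightarrow> i \<noteq> j \<longrightarrow> i \<notin> u \<longrightarrow> j \<notin> u \<longrightarrow>
        ((u, flip u {i}) \<in> D \<and> (u, flip u {j}) \<in> D \<longrightarrow>
           (flip u {i}, flip u {i, j}) \<in> D \<and> (flip u {j}, flip u {i, j}) \<in> D) \<and>
        ((flip u {i}, u) \<in> D \<and> (flip u {j}, u) \<in> D \<longrightarrow>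
           (flip u {i, j}, flip u {i}) \<in> D \<and> (flip u {i, j}, flip u {j}) \<in> D))"

end

theory Submission
  imports Defs
begin


lemma mem_flip: "x \<in> flip u I \<longleftrightarrow> (x \<in> u) \<noteq> (x \<in> I)"
  unfolding flip_def by auto

lemma flip_eq_iff: "flip x X = flip x Y \<longleftrightarrow> X = Y"
  by (auto simp: set_eq_iff mem_flip)

lemma subcube_iff: "w \<in> subcube v C \<longleftrightarrow> (\<forall>x. x \<notin> C \<longrightarrow> (x \<in> w \<longleftrightarrow> x \<in> v))"
proof
  assume "w \<in> subcube v C"
  then obtain I where "I \<subseteq> C" "w = flip v I" by (auto simp: subcube_def)
  then show "\<forall>x. x \<notin> C \<longrightarrow> (x \<in> w \<longleftrightarrow> x \<in> v)" by (auto simp: mem_flip)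
next
  assume h: "\<forall>x. x \<notin> C \<longrightarrow> (x \<in> w \<longleftrightarrow> x \<in> v)"
  have "flip v w \<subseteq> C" using h by (auto simp: mem_flip)
  moreover have "w = flip v (flip v w)" by (auto simp: set_eq_iff mem_flip)
  ultimately show "w \<in> subcube v C" unfolding subcube_def by blast
qed

definition outf :: "nat \<Rightarrow> nat set \<Rightarrow> nat set set \<Rightarrow> nat set \<Rightarrow> nat \<Rightarrow> bool" where
  "outf N F U u i = (if i < N then ((i \<notin> u) \<noteq> (i \<in> F))
      else (((u - {N}) \<in> U) \<noteq> ((N \<in> u) \<noteq> (N \<in> F))))"

definition Dg :: "nat \<Rightarrow> nat set \<Rightarrow> nat set set \<Rightarrow> (nat set \<times> nat set) set" where
  "Dg N F U = {(u, w). cube_vertex (Suc N) u \<and> (\<exists>i<Suc N. w = flip u {i} \<and> outf N F U u i)}"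

lemma Dg_iff: "(u, w) \<in> Dg N F U \<longleftrightarrow> cube_vertex (Suc N) u \<and> (\<exists>i<Suc N. w = flip u {i} \<and> outf N F U u i)"
  by (simp add: Dg_def)

lemma flip_single_inj: "flip u {i} = flip u {j} \<Longrightarrow> i = j"
  by (simp add: flip_eq_iff)

lemma Dg_edge: "(u, flip u {i}) \<in> Dg N F U \<longleftrightarrow> cube_vertex (Suc N) u \<and> i < Suc N \<and> outf N F U u i"
  unfolding Dg_iff using flip_single_inj by metis

lemma outf_flip: "i < Suc N \<Longrightarrow> outf N F U (flip u {i}) i = (\<not> outf N F U u i)"
proof (cases "i < N")
  case True then show ?thesis by (auto simp: outf_def mem_flip)
next
  case False
  assume "i < Suc N"
  with False have iN: "i = N" by simp
  have "flip u {N} - {N} = u - {N}" by (auto simp: flip_def)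
  then show ?thesis using iN by (auto simp: outf_def mem_flip)
qed

lemma outf_lt: "i < N \<Longrightarrow> outf N F U w i = ((i \<notin> w) \<noteq> (i \<in> F))"
  by (simp add: outf_def)

lemma cube_vertex_flip: "cube_vertex n u \<Longrightarrow> X \<subseteq> {..<n} \<Longrightarrow> cube_vertex n (flip u X)"
  by (auto simp: cube_vertex_def flip_def)

lemma flip_flip: "flip (flip u {i}) {i} = u"
  by (auto simp: flip_def)

lemma orient_Dg: "orientation (Suc N) (Dg N F U)"
  unfolding orientation_def
proof (intro conjI allI impI)
  show "Dg N F U \<subseteq> {(u, v). cube_edge (Suc N) u v}"
    by (auto simp: Dg_iff cube_edge_def)
next
  fix u w assume "cube_edge (Suc N) u w"
  then obtain i where cv: "cube_vertex (Suc N) u" and i: "i < Suc N" and w: "w = flip u {i}"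
    by (auto simp: cube_edge_def)
  have cw: "cube_vertex (Suc N) w" using cv i w by (auto intro: cube_vertex_flip)
  have "(u, w) \<in> Dg N F U \<longleftrightarrow> outf N F U u i" using Dg_edge cv i w by blast
  moreover have "(w, u) \<in> Dg N F U \<longleftrightarrow> outf N F U w i"
    using Dg_edge[of w i N F U] cw i w flip_flip by metis
  moreover have "outf N F U w i = (\<not> outf N F U u i)" using outf_flip i w by blast
  ultimately show "(u, w) \<in> Dg N F U \<longleftrightarrow> (w, u) \<notin> Dg N F U" by blast
qed


lemma subcube_vertex: "cube_vertex n v \<Longrightarrow> C \<subseteq> {..<n} \<Longrightarrow> w \<in> subcube v C \<Longrightarrow> cube_vertex n w"
  unfolding cube_vertex_def subcube_iff by blast

lemma flip_in_subcube: "w \<in> subcube v C \<Longrightarrow> X \<subseteq> C \<Longrightarrow> flip w X \<in> subcube v C"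
  unfolding subcube_iff by (auto simp: mem_flip)

lemma nbr_in_C: "w \<in> subcube v C \<Longrightarrow> flip w {i} \<in> subcube v C \<Longrightarrow> i \<in> C"
  unfolding subcube_iff by (auto simp: mem_flip)

lemma sink_iff:
  assumes v: "cube_vertex (Suc N) v" and C: "C \<subseteq> {..<Suc N}"
  shows "is_sink (Dg N F U) (subcube v C) w \<longleftrightarrow> w \<in> subcube v C \<and> (\<forall>i\<in>C. \<not> outf N F U w i)"
proof
  assume h: "is_sink (Dg N F U) (subcube v C) w"
  then have w: "w \<in> subcube v C" by (simp add: is_sink_def)
  have cw: "cube_vertex (Suc N) w" using subcube_vertex[OF v C w] .
  show "w \<in> subcube v C \<and> (\<forall>i\<in>C. \<not> outf N F U w i)"
  proof (intro conjI ballI w)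
    fix i assume i: "i \<in> C"
    have "flip w {i} \<in> subcube v C" using flip_in_subcube[OF w] i by auto
    then have "(w, flip w {i}) \<notin> Dg N F U" using h by (simp add: is_sink_def)
    then show "\<not> outf N F U w i" using Dg_edge[of w i N F U] cw i C by auto
  qed
next
  assume h: "w \<in> subcube v C \<and> (\<forall>i\<in>C. \<not> outf N F U w i)"
  show "is_sink (Dg N F U) (subcube v C) w"
    unfolding is_sink_def
  proof (intro conjI ballI)
    show "w \<in> subcube v C" using h by simp
    fix u assume u: "u \<in> subcube v C"
    show "(w, u) \<notin> Dg N F U"
    proof
      assume "(w, u) \<in> Dg N F U"
      then obtain i where "u = flip w {i}" "outf N F U w i" by (auto simp: Dg_iff)
      moreover have "i \<in> C" using nbr_in_C[of w v C i] h u calculation(1) by simp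
      ultimately show False using h by blast
    qed
  qed
qed

lemma source_iff:
  assumes v: "cube_vertex (Suc N) v" and C: "C \<subseteq> {..<Suc N}"
  shows "is_source (Dg N F U) (subcube v C) w \<longleftrightarrow> w \<in> subcube v C \<and> (\<forall>i\<in>C. outf N F U w i)"
proof
  assume h: "is_source (Dg N F U) (subcube v C) w"
  then have w: "w \<in> subcube v C" by (simp add: is_source_def)
  show "w \<in> subcube v C \<and> (\<forall>i\<in>C. outf N F U w i)"
  proof (intro conjI ballI w)
    fix i assume i: "i \<in> C"
    have f: "flip w {i} \<in> subcube v C" using flip_in_subcube[OF w] i by auto
    have cw: "cube_vertex (Suc N) (flip w {i})" using subcube_vertex[OF v C f] .
    have "(flip w {i}, w) \<notin> Dg N F U" using h f by (simp add: is_source_def)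
    then have "\<not> outf N F U (flip w {i}) i" using Dg_edge[of "flip w {i}" i] cw i C flip_flip by fastforce
    then show "outf N F U w i" using outf_flip i C by blast
  qed
next
  assume h: "w \<in> subcube v C \<and> (\<forall>i\<in>C. outf N F U w i)"
  show "is_source (Dg N F U) (subcube v C) w"
    unfolding is_source_def
  proof (intro conjI ballI)
    show "w \<in> subcube v C" using h by simp
    fix u assume u: "u \<in> subcube v C"
    show "(u, w) \<notin> Dg N F U"
    proof
      assume "(u, w) \<in> Dg N F U"
      then obtain i where i: "i < Suc N" "w = flip u {i}" "outf N F U u i" by (auto simp: Dg_iff)
      then have uw: "u = flip w {i}" using flip_flip by metis
      have "i \<in> C" using nbr_in_C[of w v C i] h u uw by simp
      then have "outf N F U w i" using h by blast
      have "outf N F U u i = (\<not> outf N F U w i)" using outf_flip[OF i(1), of F U w] uw by simp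
      then show False using i(3) \<open>outf N F U w i\<close> by blast
    qed
  qed
qed

lemma sink_unique:
  assumes v: "cube_vertex (Suc N) v" and C: "C \<subseteq> {..<Suc N}"
    and w1: "is_sink (Dg N F U) (subcube v C) w1" and w2: "is_sink (Dg N F U) (subcube v C) w2"
  shows "w1 = w2"
proof -
  have a1: "w1 \<in> subcube v C" "\<forall>i\<in>C. \<not> outf N F U w1 i" using w1 sink_iff[OF v C] by auto
  have a2: "w2 \<in> subcube v C" "\<forall>i\<in>C. \<not> outf N F U w2 i" using w2 sink_iff[OF v C] by auto
  have ne: "x \<in> w1 \<longleftrightarrow> x \<in> w2" if "x \<noteq> N" for x
  proof (cases "x \<in> C")
    case True
    then have "x < N" using C that by auto
    moreover have "\<not> outf N F U w1 x" "\<not> outf N F U w2 x" using a1 a2 True by auto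
    ultimately show ?thesis by (simp add: outf_lt)
  next
    case False then show ?thesis using a1(1) a2(1) by (auto simp: subcube_iff)
  qed
  then have e: "w1 - {N} = w2 - {N}" by auto
  have "N \<in> w1 \<longleftrightarrow> N \<in> w2"
  proof (cases "N \<in> C")
    case True
    then have "\<not> outf N F U w1 N" "\<not> outf N F U w2 N" using a1 a2 by auto
    then show ?thesis using e by (simp add: outf_def) blast
  next
    case False then show ?thesis using a1(1) a2(1) by (auto simp: subcube_iff)
  qed
  then show ?thesis using ne by (intro set_eqI) (metis)
qed

lemma sink_exists:
  assumes v: "cube_vertex (Suc N) v" and C: "C \<subseteq> {..<Suc N}"
  shows "\<exists>w. is_sink (Dg N F U) (subcube v C) w"
proof -
  define w0 where "w0 = (v - C) \<union> {i\<in>C. i < N \<and> i \<notin> F}"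
  define w where "w = (if N \<in> C \<and> ((w0 \<in> U) \<noteq> (N \<in> F)) then insert N w0 else w0)"
  have N0: "N \<in> C \<Longrightarrow> N \<notin> w0" by (auto simp: w0_def)
  have ws: "w \<in> subcube v C" by (auto simp: subcube_iff w_def w0_def)
  have "\<not> outf N F U w i" if i: "i \<in> C" for i
  proof (cases "i < N")
    case True then show ?thesis using i by (auto simp: outf_lt w_def w0_def)
  next
    case False
    then have iN: "i = N" using i C by auto
    have e: "w - {N} = w0" using N0 i iN by (auto simp: w_def)
    show ?thesis using iN i e by (auto simp: outf_def w_def)
  qed
  then show ?thesis using ws sink_iff[OF v C] by blast
qed

lemma USO_Dg: "USO (Suc N) (Dg N F U)"
  unfolding USO_def
proof (intro conjI orient_Dg allI impI)
  fix v C assume v: "cube_vertex (Suc N) v" and C: "C \<subseteq> {..<Suc N}"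
  obtain w where w: "is_sink (Dg N F U) (subcube v C) w" using sink_exists[OF v C] by blast
  show "\<exists>!w. is_sink (Dg N F U) (subcube v C) w"
    by (rule ex1I[of _ w]) (use w sink_unique[OF v C] in blast)+
qed


lemma flip_flip2: "flip u (flip u X) = X"
  by (auto simp: flip_def)

lemma outf_F: "i < Suc N \<Longrightarrow> outf N F U u i = (outf N {} U u i \<noteq> (i \<in> F))"
  by (auto simp: outf_def less_Suc_eq)

lemma reorient_Dg: "reorient (Dg N {} U) F = Dg N F U"
proof (rule set_eqI, clarify)
  fix a b
  show "(a, b) \<in> reorient (Dg N {} U) F \<longleftrightarrow> (a, b) \<in> Dg N F U"
  proof
    assume "(a, b) \<in> reorient (Dg N {} U) F"
    then consider (p) "(a, b) \<in> Dg N {} U" "flip a b \<inter> F = {}"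
      | (q) "(b, a) \<in> Dg N {} U" "flip b a \<inter> F \<noteq> {}"
      unfolding reorient_def by blast
    then show "(a, b) \<in> Dg N F U"
    proof cases
      case p
      then obtain i where i: "cube_vertex (Suc N) a" "i < Suc N" "b = flip a {i}" "outf N {} U a i"
        by (auto simp: Dg_iff)
      have "i \<notin> F" using p(2) i(3) flip_flip2[of a "{i}"] by auto
      then have "outf N F U a i" using i(4) outf_F[OF i(2)] by metis
      then show ?thesis using i Dg_edge by metis
    next
      case q
      then obtain i where i: "cube_vertex (Suc N) b" "i < Suc N" "a = flip b {i}" "outf N {} U b i"
        by (auto simp: Dg_iff)
      have iF: "i \<in> F" using q(2) i(3) flip_flip2[of b "{i}"] by auto
      have ca: "cube_vertex (Suc N) a" using i cube_vertex_flip by auto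
      have ba: "b = flip a {i}" using i(3) flip_flip by metis
      have "\<not> outf N {} U a i" using outf_flip[OF i(2), of "{}" U a] i(4) ba by simp
      then have "outf N F U a i" using iF outf_F[OF i(2)] by metis
      then show ?thesis using ca i(2) ba Dg_edge by metis
    qed
  next
    assume "(a, b) \<in> Dg N F U"
    then obtain i where i: "cube_vertex (Suc N) a" "i < Suc N" "b = flip a {i}" "outf N F U a i"
      by (auto simp: Dg_iff)
    have fab: "flip a b = {i}" using i(3) flip_flip2 by metis
    show "(a, b) \<in> reorient (Dg N {} U) F"
    proof (cases "i \<in> F")
      case False
      then have "outf N {} U a i" using i(4) False outf_F[OF i(2)] by metis
      then have "(a, b) \<in> Dg N {} U" using i Dg_edge by metis
      then show ?thesis unfolding reorient_def using fab False by auto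
    next
      case True
      then have "\<not> outf N {} U a i" using i(4) outf_F[OF i(2)] by metis
      then have o: "outf N {} U b i" using outf_flip[OF i(2), of "{}" U a] i(3) by simp
      have cb: "cube_vertex (Suc N) b" using i cube_vertex_flip by auto
      have ab: "a = flip b {i}" using i(3) flip_flip by metis
      have "(b, a) \<in> Dg N {} U" using o cb ab i(2) Dg_edge by metis
      moreover have "flip b a = {i}" using ab flip_flip2 by metis
      ultimately show ?thesis unfolding reorient_def using True by auto
    qed
  qed
qed

lemma acyclic_Dg: "acyclic (Dg N {} U)"
proof -
  define f where "f u = 2 * card (u - {N}) + (if outf N {} U u N then 0 else (1::nat))" for u
  have "Dg N {} U \<subseteq> measure f"
  proof (clarify)
    fix a b assume "(a, b) \<in> Dg N {} U"
    then obtain i where i: "cube_vertex (Suc N) a" "i < Suc N" "b = flip a {i}" "outf N {} U a i"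
      by (auto simp: Dg_iff)
    have fin: "finite (a - {N})" using i(1) unfolding cube_vertex_def
      by (meson finite_Diff finite_lessThan finite_subset)
    show "(a, b) \<in> measure f"
    proof (cases "i < N")
      case True
      then have ia: "i \<notin> a" using i(4) by (simp add: outf_lt)
      have "b - {N} = insert i (a - {N})" using i(3) True ia by (auto simp: flip_def)
      then have "card (b - {N}) = Suc (card (a - {N}))" using fin ia by simp
      then show ?thesis by (simp add: f_def)
    next
      case False
      then have iN: "i = N" using i(2) by simp
      have "b - {N} = a - {N}" using i(3) iN by (auto simp: flip_def)
      moreover have "\<not> outf N {} U b N" using outf_flip[of N N "{}" U a] i(3,4) iN by simp
      ultimately show ?thesis using i(4) iN by (simp add: f_def)
    qed
  qed
  then show ?thesis using acyclic_subset wf_acyclic wf_measure by metis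
qed

definition upset :: "nat \<Rightarrow> nat set set \<Rightarrow> bool" where
  "upset N U \<longleftrightarrow> (\<forall>x y. x \<in> U \<longrightarrow> x \<subseteq> y \<longrightarrow> y \<subseteq> {..<N} \<longrightarrow> y \<in> U)"

lemma lu_aux:
  assumes up: "upset N U" and u: "cube_vertex (Suc N) u" and ij: "i \<noteq> j" "i < Suc N" "j < Suc N"
    and nu: "i \<notin> u" "j \<notin> u" and oj: "outf N {} U u j"
  shows "outf N {} U (flip u {i}) j"
proof (cases "j < N")
  case True then show ?thesis using nu ij by (simp add: outf_lt mem_flip)
next
  case False
  then have jN: "j = N" using ij by simp
  then have iN: "i < N" using ij by simp
  have "u - {N} \<in> U" using oj jN nu by (simp add: outf_def)
  moreover have "u - {N} \<subseteq> flip u {i} - {N}" using nu by (auto simp: flip_def)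
  moreover have "flip u {i} - {N} \<subseteq> {..<N}" using u iN
    by (auto simp: flip_def cube_vertex_def less_Suc_eq)
  ultimately have "flip u {i} - {N} \<in> U" using up unfolding upset_def by blast
  moreover have "N \<notin> flip u {i}" using nu jN iN by (simp add: mem_flip)
  ultimately show ?thesis using jN by (simp add: outf_def)
qed

lemma lu_Dg: "upset N U \<Longrightarrow> locally_uniform (Suc N) (Dg N {} U)"
  unfolding locally_uniform_def
proof (intro allI impI, rule conjI)
  fix u i j assume up: "upset N U" and u: "cube_vertex (Suc N) u" and i: "i < Suc N" and j: "j < Suc N"
    and ij: "i \<noteq> j" and iu: "i \<notin> u" and ju: "j \<notin> u"
  have fij: "flip u {i, j} = flip (flip u {i}) {j}" "flip u {i, j} = flip (flip u {j}) {i}"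
    using ij by (auto simp: flip_def)
  have cui: "cube_vertex (Suc N) (flip u {i})" "cube_vertex (Suc N) (flip u {j})"
    using u i j cube_vertex_flip by auto
  show "(u, flip u {i}) \<in> Dg N {} U \<and> (u, flip u {j}) \<in> Dg N {} U \<longrightarrow>
        (flip u {i}, flip u {i, j}) \<in> Dg N {} U \<and> (flip u {j}, flip u {i, j}) \<in> Dg N {} U"
  proof
    assume h: "(u, flip u {i}) \<in> Dg N {} U \<and> (u, flip u {j}) \<in> Dg N {} U"
    then have oi: "outf N {} U u i" and oj: "outf N {} U u j" using Dg_edge by blast+
    have "outf N {} U (flip u {i}) j" using lu_aux[OF up u ij i j iu ju oj] .
    moreover have "outf N {} U (flip u {j}) i" using lu_aux[OF up u _ j i ju iu oi] ij by blast
    ultimately show "(flip u {i}, flip u {i, j}) \<in> Dg N {} U \<and> (flip u {j}, flip u {i, j}) \<in> Dg N {} U"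
      using fij cui i j Dg_edge by metis
  qed
  show "(flip u {i}, u) \<in> Dg N {} U \<and> (flip u {j}, u) \<in> Dg N {} U \<longrightarrow>
        (flip u {i, j}, flip u {i}) \<in> Dg N {} U \<and> (flip u {i, j}, flip u {j}) \<in> Dg N {} U"
  proof
    assume h: "(flip u {i}, u) \<in> Dg N {} U \<and> (flip u {j}, u) \<in> Dg N {} U"
    have "outf N {} U (flip u {i}) i" using h Dg_edge[of "flip u {i}" i] flip_flip by metis
    moreover have "outf N {} U (flip u {j}) j" using h Dg_edge[of "flip u {j}" j] flip_flip by metis
    moreover have "i < N \<or> j < N" using i j ij by auto
    ultimately have False using iu ju by (auto simp: outf_lt mem_flip)
    then show "(flip u {i, j}, flip u {i}) \<in> Dg N {} U \<and> (flip u {i, j}, flip u {j}) \<in> Dg N {} U"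
      by blast
  qed
qed




definition idx :: "nat \<Rightarrow> nat \<Rightarrow> nat \<Rightarrow> nat" where
  "idx m r t = (if r + t < m then r + t else r + t - m)"

definition rA :: "nat list \<Rightarrow> nat \<Rightarrow> nat \<Rightarrow> nat set" where
  "rA c r k = (\<lambda>t. c ! idx (length c) r t) ` {..<k}"

lemma rA_0: "rA c r 0 = {}" by (simp add: rA_def)

lemma rA_Suc: "rA c r (Suc k) = insert (c ! idx (length c) r k) (rA c r k)"
  by (simp add: rA_def lessThan_Suc)

lemma idx_lt: "r < m \<Longrightarrow> t < m \<Longrightarrow> idx m r t < m" unfolding idx_def by auto

lemma idx_inj: "r < m \<Longrightarrow> t < m \<Longrightarrow> t' < m \<Longrightarrow> idx m r t = idx m r t' \<Longrightarrow> t = t'"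
  by (auto simp: idx_def split: if_splits)

lemma rA_notin:
  assumes "distinct c" "r < length c" "k < length c"
  shows "c ! idx (length c) r k \<notin> rA c r k"
proof
  assume "c ! idx (length c) r k \<in> rA c r k"
  then obtain t where t: "t < k" "c ! idx (length c) r k = c ! idx (length c) r t"
    by (auto simp: rA_def)
  have l1: "idx (length c) r k < length c" using assms by (simp add: idx_lt)
  have l2: "idx (length c) r t < length c" using assms t by (simp add: idx_lt)
  have "idx (length c) r k = idx (length c) r t"
    using nth_eq_iff_index_eq[OF assms(1) l1 l2] t(2) by simp
  then have "k = t" using idx_inj[of r "length c" k t] assms t by simp
  then show False using t by simp
qed

lemma rA_sub: "r < length c \<Longrightarrow> k \<le> length c \<Longrightarrow> rA c r k \<subseteq> set c"
  by (auto simp: rA_def intro!: nth_mem idx_lt)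

lemma rA_card: "distinct c \<Longrightarrow> r < length c \<Longrightarrow> k \<le> length c \<Longrightarrow> card (rA c r k) = k"
proof (induction k)
  case 0 then show ?case by (simp add: rA_0)
next
  case (Suc k)
  then have "card (rA c r k) = k" by simp
  moreover have "c ! idx (length c) r k \<notin> rA c r k" using rA_notin Suc.prems by simp
  moreover have "finite (rA c r k)" by (simp add: rA_def)
  ultimately show ?case by (simp add: rA_Suc)
qed

lemma rA_full: "distinct c \<Longrightarrow> r < length c \<Longrightarrow> rA c r (length c) = set c"
  using card_subset_eq[of "set c" "rA c r (length c)"] rA_sub[of r c "length c"]
    rA_card[of c r "length c"] distinct_card[of c] by simp

lemma rA_one: "r < length c \<Longrightarrow> rA c r 1 = {c ! r}"
  by (simp add: rA_def idx_def lessThan_Suc)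

lemma rA_m1:
  assumes "distinct c" "0 < r" "r < length c"
  shows "rA c r (length c - 1) = set c - {c ! (r - 1)}"
proof -
  have s: "Suc (length c - 1) = length c" using assms by simp
  have i: "idx (length c) r (length c - 1) = r - 1" using assms by (simp add: idx_def)
  have "set c = insert (c ! (r - 1)) (rA c r (length c - 1))"
    using rA_Suc[of c r "length c - 1"] rA_full[OF assms(1,3)] s i by simp
  moreover have "c ! (r - 1) \<notin> rA c r (length c - 1)"
    using rA_notin[OF assms(1,3), of "length c - 1"] i assms by simp
  ultimately show ?thesis by blast
qed

lemma rA_disj:
  assumes d: "distinct c" and r: "r < length c" "r' < length c" "r \<noteq> r'"
    and k: "k \<le> length c" "k' \<le> length c" and e: "rA c r k = rA c r' k'"
  shows "k = 0 \<or> k = length c"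
proof (rule ccontr)
  let ?m = "length c"
  assume "\<not> (k = 0 \<or> k = ?m)"
  then have k0: "0 < k" "k < ?m" using k by auto
  have kk: "k' = k" using rA_card[OF d r(1) k(1)] rA_card[OF d r(2) k(2)] e by simp
  have "c ! r \<in> rA c r k" using k0 r by (auto simp: rA_def idx_def intro!: image_eqI[of _ _ 0])
  then have "c ! r \<in> rA c r' k" using e kk by simp
  then obtain t where t: "t < k" "c ! r = c ! idx ?m r' t" by (auto simp: rA_def)
  have l2: "idx ?m r' t < ?m" using r t k0 by (simp add: idx_lt)
  have rt: "r = idx ?m r' t"
    using nth_eq_iff_index_eq[OF d r(1) l2] t(2) by simp
  have t0: "t \<noteq> 0"
  proof
    assume "t = 0"
    then have "r = r'" using rt r(2) by (simp add: idx_def)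
    then show False using r(3) by simp
  qed
  have "idx ?m r (k - t) = idx ?m r' k" using rt t k0 r t0 unfolding idx_def by (auto split: if_splits)
  moreover have "k - t < k" using t0 t by simp
  ultimately have "c ! idx ?m r' k \<in> rA c r k" unfolding rA_def
    by (metis image_eqI lessThan_iff)
  then have "c ! idx ?m r' k \<in> rA c r' k" using e kk by simp
  then show False using rA_notin[OF d r(2) k0(2)] by simp
qed

definition seg :: "nat set \<Rightarrow> nat list \<Rightarrow> nat \<Rightarrow> nat \<Rightarrow> nat \<Rightarrow> nat set list" where
  "seg x c r a b = map (\<lambda>k. flip x (rA c r k)) [a..<Suc b]"

lemma seg_set: "y \<in> set (seg x c r a b) \<longleftrightarrow> (\<exists>k. a \<le> k \<and> k \<le> b \<and> y = flip x (rA c r k))"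
  by (auto simp: seg_def)

lemma seg_ne: "a \<le> b \<Longrightarrow> seg x c r a b \<noteq> []" by (simp add: seg_def)

lemma seg_hd: "a \<le> b \<Longrightarrow> hd (seg x c r a b) = flip x (rA c r a)"
  by (simp add: seg_def hd_map upt_rec)

lemma seg_last: "a \<le> b \<Longrightarrow> last (seg x c r a b) = flip x (rA c r b)"
  by (simp add: seg_def last_map)

lemma seg_len: "length (seg x c r a b) = Suc b - a" unfolding seg_def by auto

lemma flip_eq_iff': "flip x X = flip x Y \<longleftrightarrow> X = Y"
  by (auto simp: set_eq_iff flip_def)

lemma seg_distinct:
  assumes "distinct c" "r < length c \<or> b \<le> a" "b \<le> length c"
  shows "distinct (seg x c r a b)"
proof (cases "b \<le> a")
  case True
  then have "length (seg x c r a b) \<le> 1" by (simp add: seg_len)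
  then show ?thesis by (cases "seg x c r a b") auto
next
  case False
  then have r: "r < length c" using assms by simp
  have "inj_on (\<lambda>k. flip x (rA c r k)) (set [a..<Suc b])"
  proof (rule inj_onI)
    fix k k' assume "k \<in> set [a..<Suc b]" "k' \<in> set [a..<Suc b]" and e: "flip x (rA c r k) = flip x (rA c r k')"
    then have "k \<le> length c" "k' \<le> length c" using assms by auto
    moreover have "rA c r k = rA c r k'" using e flip_eq_iff' by blast
    ultimately show "k = k'" using rA_card[OF assms(1) r] by metis
  qed
  then show ?thesis by (simp add: seg_def distinct_map)
qed

definition walk :: "('a \<times> 'a) set \<Rightarrow> 'a list \<Rightarrow> bool" where
  "walk D xs \<longleftrightarrow> (\<forall>k. Suc k < length xs \<longrightarrow> (xs ! k, xs ! Suc k) \<in> D)"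

lemma walk_map:
  assumes "\<And>k. a \<le> k \<Longrightarrow> k < b \<Longrightarrow> (f k, f (Suc k)) \<in> D"
  shows "walk D (map f [a..<Suc b])"
  unfolding walk_def
proof (intro allI impI)
  fix k assume "Suc k < length (map f [a..<Suc b])"
  then have "Suc k < Suc b - a" by (simp only: length_map length_upt)
  then have "map f [a..<Suc b] ! k = f (a + k)" "map f [a..<Suc b] ! Suc k = f (Suc (a + k))"
    by (simp_all del: upt_Suc add: nth_upt)
  moreover have "(f (a + k), f (Suc (a + k))) \<in> D" using assms \<open>Suc k < Suc b - a\<close> by simp
  ultimately show "(map f [a..<Suc b] ! k, map f [a..<Suc b] ! Suc k) \<in> D" by simp
qed

lemma walk_append:
  assumes "walk D xs" "walk D ys" "xs \<noteq> []" "ys \<noteq> []" "(last xs, hd ys) \<in> D"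
  shows "walk D (xs @ ys)"
  unfolding walk_def
proof (intro allI impI)
  fix k assume k: "Suc k < length (xs @ ys)"
  consider (a) "Suc k < length xs" | (b) "Suc k = length xs" | (c) "length xs \<le> k" by linarith
  then show "((xs @ ys) ! k, (xs @ ys) ! Suc k) \<in> D"
  proof cases
    case a then show ?thesis using assms(1) by (simp add: walk_def nth_append)
  next
    case b
    then have "k = length xs - 1" by simp
    then have "(xs @ ys) ! k = last xs" using assms(3) b by (simp add: nth_append last_conv_nth)
    moreover have "(xs @ ys) ! Suc k = hd ys" using b assms(4) by (simp add: nth_append hd_conv_nth)
    ultimately show ?thesis using assms(5) by simp
  next
    case c
    then have "Suc (k - length xs) < length ys" using k by simp
    then have "(ys ! (k - length xs), ys ! Suc (k - length xs)) \<in> D" using assms(2) by (simp add: walk_def)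
    moreover have "Suc k - length xs = Suc (k - length xs)" using c by simp
    ultimately show ?thesis using c by (simp add: nth_append)
  qed
qed

lemma walk_single: "walk D [x]" by (simp add: walk_def)




lemma dpath_walk: "dpath D S s t p \<longleftrightarrow> p \<noteq> [] \<and> hd p = s \<and> last p = t \<and> distinct p \<and> set p \<subseteq> S \<and> walk D p"
  by (simp add: dpath_def walk_def)

definition HKP :: "(nat set \<times> nat set) set \<Rightarrow> nat set set \<Rightarrow> nat set \<Rightarrow> nat set \<Rightarrow> nat \<Rightarrow> bool" where
  "HKP D S s t d \<longleftrightarrow> (\<exists>P :: nat \<Rightarrow> nat set list.
            (\<forall>i<d. dpath D S s t (P i)) \<and>
            inj_on P {..<d} \<and>
            (\<forall>i<d. \<forall>j<d. i \<noteq> j \<longrightarrow> set (P i) \<inter> set (P j) \<subseteq> {s, t}))"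

lemma HKP_intro:
  assumes p: "\<And>i. i < d \<Longrightarrow> dpath D S s t (P i)"
    and dj: "\<And>i j. i < d \<Longrightarrow> j < d \<Longrightarrow> i \<noteq> j \<Longrightarrow> set (P i) \<inter> set (P j) \<subseteq> {s, t}"
    and l: "\<And>i j. i < d \<Longrightarrow> j < d \<Longrightarrow> i \<noteq> j \<Longrightarrow> 3 \<le> length (P i) \<or> 3 \<le> length (P j)"
  shows "HKP D S s t d"
  unfolding HKP_def
proof (intro exI conjI allI impI)
  show "inj_on P {..<d}"
  proof (rule inj_onI, rule ccontr)
    fix i j assume i: "i \<in> {..<d}" and j: "j \<in> {..<d}" and e: "P i = P j" and ne: "i \<noteq> j"
    have "set (P i) \<subseteq> {s, t}" using dj[of i j] i j e ne by auto
    moreover have "card {s, t} \<le> 2" by (simp add: card_insert_if)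
    ultimately have "card (set (P i)) \<le> 2" using card_mono[of "{s, t}" "set (P i)"] by simp
    moreover have "distinct (P i)" using p[of i] i by (simp add: dpath_def)
    moreover have "3 \<le> length (P i)" using l[of i j] i j e ne by auto
    ultimately show False using distinct_card by fastforce
  qed
qed (use p dj in auto)


lemma facet_edge:
  assumes cx: "cube_vertex (Suc N) x" and c: "set c \<subseteq> {..<N}" and d: "distinct c"
    and r: "r < length c" and k: "k < length c" and o: "\<forall>i\<in>set c. outf N F U x i"
  shows "(flip x (rA c r k), flip x (rA c r (Suc k))) \<in> Dg N F U"
proof -
  let ?i = "c ! idx (length c) r k"
  have ic: "?i \<in> set c" using r k by (simp add: idx_lt)
  have ni: "?i \<notin> rA c r k" using rA_notin[OF d r k] .
  have e: "flip x (rA c r (Suc k)) = flip (flip x (rA c r k)) {?i}"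
    using ni by (auto simp: rA_Suc flip_def)
  have sub: "rA c r k \<subseteq> {..<Suc N}" using rA_sub[OF r, of k] k c by auto
  have cv: "cube_vertex (Suc N) (flip x (rA c r k))" using cube_vertex_flip[OF cx sub] .
  have iN: "?i < N" using ic c by auto
  have "outf N F U (flip x (rA c r k)) ?i = outf N F U x ?i"
    using iN ni by (simp add: outf_lt mem_flip)
  then have "outf N F U (flip x (rA c r k)) ?i" using o ic by simp
  then show ?thesis using e cv iN Dg_edge by (metis less_SucI)
qed

lemma seg_walk:
  assumes cx: "cube_vertex (Suc N) x" and c: "set c \<subseteq> {..<N}" and d: "distinct c"
    and r: "r < length c \<or> b \<le> a" and b: "b \<le> length c" and o: "\<forall>i\<in>set c. outf N F U x i"
  shows "walk (Dg N F U) (seg x c r a b)"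
  unfolding seg_def
proof (rule walk_map)
  fix k assume "a \<le> k" "k < b"
  then have "r < length c" "k < length c" using r b by auto
  then show "(flip x (rA c r k), flip x (rA c r (Suc k))) \<in> Dg N F U"
    using facet_edge[OF cx c d] o by blast
qed

lemma seg_sub:
  assumes sS: "x \<in> subcube v C" and c: "set c \<subseteq> C" and r: "r < length c" and b: "b \<le> length c"
  shows "set (seg x c r a b) \<subseteq> subcube v C"
proof
  fix y assume "y \<in> set (seg x c r a b)"
  then obtain k where k: "k \<le> b" "y = flip x (rA c r k)" by (auto simp: seg_set)
  have "rA c r k \<subseteq> C" using rA_sub[OF r, of k] k b c by auto
  then show "y \<in> subcube v C" using flip_in_subcube[OF sS] k by simp
qed

lemma flip_empty: "flip x {} = x" by (simp add: flip_def)

lemma rot_path: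
  assumes cx: "cube_vertex (Suc N) s" and sS: "s \<in> subcube v C" and c: "set c \<subseteq> {..<N}" "set c \<subseteq> C"
    and d: "distinct c" and r: "r < length c" and o: "\<forall>i\<in>set c. outf N F U s i"
  shows "dpath (Dg N F U) (subcube v C) s (flip s (set c)) (seg s c r 0 (length c))"
  unfolding dpath_walk
  using seg_ne[of 0 "length c"] seg_hd[of 0 "length c" s c r] seg_last[of 0 "length c" s c r]
    seg_distinct[OF d, of r "length c" 0 s] seg_sub[OF sS c(2) r, of "length c" 0]
    seg_walk[OF cx c(1) d _ _ o, of r "length c" 0] r rA_0 rA_full[OF d r] flip_empty
  by simp

lemma rot_disj:
  assumes d: "distinct c" and r: "r < length c" "r' < length c" "r \<noteq> r'"
  shows "set (seg s c r 0 (length c)) \<inter> set (seg s c r' 0 (length c)) \<subseteq> {s, flip s (set c)}"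
proof
  fix y assume "y \<in> set (seg s c r 0 (length c)) \<inter> set (seg s c r' 0 (length c))"
  then obtain k k' where k: "k \<le> length c" "y = flip s (rA c r k)" "k' \<le> length c" "y = flip s (rA c r' k')"
    by (auto simp: seg_set)
  then have "rA c r k = rA c r' k'" by (simp add: flip_eq_iff)
  then have "k = 0 \<or> k = length c" using rA_disj[OF d r, of k k'] k by simp
  then show "y \<in> {s, flip s (set c)}" using k rA_0 rA_full[OF d r(1)] flip_empty by auto
qed

lemma caseI:
  assumes v: "cube_vertex (Suc N) v" and C: "C \<subseteq> {..<N}" and sS: "s \<in> subcube v C"
    and o: "\<forall>i\<in>C. outf N F U s i" and t: "t = flip s C"
  shows "HKP (Dg N F U) (subcube v C) s t (card C)"
proof -
  define c where "c = sorted_list_of_set C"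
  have fC: "finite C" using C finite_subset by blast
  have sc: "set c = C" and d: "distinct c" and lc: "length c = card C" using fC by (auto simp: c_def)
  have "C \<subseteq> {..<Suc N}" using C by auto
  then have cx: "cube_vertex (Suc N) s" using subcube_vertex[OF v _ sS] by blast
  define P where "P i = seg s c i 0 (length c)" for i
  show ?thesis
  proof (rule HKP_intro[of "card C" _ _ _ _ P])
    fix i assume "i < card C"
    then show "dpath (Dg N F U) (subcube v C) s t (P i)"
      using rot_path[OF cx sS _ _ d, of i] sc C o t lc by (simp add: P_def)
  next
    fix i j assume "i < card C" "j < card C" "i \<noteq> j"
    then show "set (P i) \<inter> set (P j) \<subseteq> {s, t}" using rot_disj[OF d, of i j s] lc sc t by (simp add: P_def)
  next
    fix i j assume "i < card C" "j < card C" "i \<noteq> j"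
    then show "3 \<le> length (P i) \<or> 3 \<le> length (P j)" by (simp add: P_def seg_len lc)
  qed
qed


lemma seg_N:
  assumes "N \<notin> set c" "r < length c" "b \<le> length c" "y \<in> set (seg x c r a b)"
  shows "N \<in> y \<longleftrightarrow> N \<in> x"
proof -
  obtain k where k: "k \<le> b" "y = flip x (rA c r k)" using assms(4) by (auto simp: seg_set)
  have "N \<notin> rA c r k" using rA_sub[OF assms(2), of k] k assms(1,3) by auto
  then show ?thesis using k by (simp add: mem_flip)
qed

lemma dist3: "s \<notin> set xs \<Longrightarrow> t \<notin> set xs \<Longrightarrow> distinct xs \<Longrightarrow> s \<noteq> t \<Longrightarrow> distinct (s # xs @ [t])"
  by simp

lemma caseII:
  assumes v: "cube_vertex (Suc N) v" and C: "C \<subseteq> {..<Suc N}" and NC: "N \<in> C"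
    and sS: "s \<in> subcube v C"
    and o: "\<forall>i\<in>C. outf N F U s i" and t: "t = flip s (C - {N})" and ot: "\<not> outf N F U t N"
  shows "HKP (Dg N F U) (subcube v C) s t (card C)"
proof -
  define C' where "C' = C - {N}"
  define c where "c = sorted_list_of_set C'"
  define m where "m = length c"
  have fC: "finite C" using C finite_subset by blast
  have C'N: "C' \<subseteq> {..<N}" using C by (auto simp: C'_def less_Suc_eq)
  have sc: "set c = C'" and d: "distinct c" and lc: "m = card C'" using fC by (auto simp: c_def C'_def m_def)
  have cC: "card C = Suc m" using card_Suc_Diff1[OF fC NC] lc by (simp add: C'_def)
  have cx: "cube_vertex (Suc N) s" using subcube_vertex[OF v C sS] .
  have st: "s \<noteq> t" using o NC ot by auto
  have m1: "1 \<le> m"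
  proof (rule ccontr)
    assume "\<not> 1 \<le> m"
    then have "card C' = 0" using lc by simp
    then have "C' = {}" using fC by (simp add: C'_def)
    then show False using st t flip_empty unfolding C'_def by metis
  qed
  have cne: "c \<noteq> []" using m1 by (auto simp: m_def)
  define s' where "s' = flip s {N}"
  have s'S: "s' \<in> subcube v C" using flip_in_subcube[OF sS] NC by (simp add: s'_def)
  have cs': "cube_vertex (Suc N) s'" using subcube_vertex[OF v C s'S] .
  have tS: "t \<in> subcube v C" using flip_in_subcube[OF sS] t by auto
  have o'2: "\<forall>i\<in>set c. outf N F U s i" using o sc by (auto simp: C'_def)
  have "outf N F U s' i" if "i \<in> set c" for i
  proof -
    have "i < N" using that sc C'N by auto
    then have "outf N F U s' i = outf N F U s i" by (simp add: s'_def outf_lt mem_flip)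
    then show ?thesis using o'2 that by simp
  qed
  then have o': "\<forall>i\<in>set c. outf N F U s' i" "\<forall>i\<in>set c. outf N F U s i" using o'2 by auto
  have Nc: "N \<notin> set c" using sc by (simp add: C'_def)
  have fs't: "flip s' C' = flip t {N}" using t by (auto simp: s'_def C'_def flip_def)
  have e1: "(s, s') \<in> Dg N F U" using Dg_edge cx o NC by (simp add: s'_def)
  have ctN: "cube_vertex (Suc N) (flip t {N})" using cube_vertex_flip subcube_vertex[OF v C tS] by auto
  have e2: "(flip t {N}, t) \<in> Dg N F U"
    using Dg_edge[of "flip t {N}" N N F U] ctN outf_flip[of N N F U t] ot flip_flip[of t N] by simp
  define Pd where "Pd = s # seg s' c 0 0 m @ [t]"
  define P where "P i = (if i < m then seg s c i 0 m else Pd)" for i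
  have Ns': "N \<in> s' \<longleftrightarrow> N \<notin> s" by (simp add: s'_def mem_flip)
  have Nt: "N \<in> t \<longleftrightarrow> N \<in> s" using t by (simp add: mem_flip)
  have segs': "N \<in> y \<longleftrightarrow> N \<notin> s" if "y \<in> set (seg s' c 0 0 m)" for y
    using seg_N[OF Nc _ _ that] m1 Ns' cne by (simp add: m_def)
  have segs: "N \<in> y \<longleftrightarrow> N \<in> s" if "i < m" "y \<in> set (seg s c i 0 m)" for y i
    using seg_N[OF Nc _ _ that(2)] that(1) by (simp add: m_def)
  have hd': "hd (seg s' c 0 0 m) = s'" using seg_hd[of 0 m s' c 0] rA_0 flip_empty by simp
  have last': "last (seg s' c 0 0 m) = flip t {N}"
    using seg_last[of 0 m s' c 0] rA_full[OF d, of 0] m1 fs't sc cne by (simp add: m_def)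
  have w': "walk (Dg N F U) (seg s' c 0 0 m)"
    using seg_walk[OF cs' _ d _ _ o'(1), of 0 m 0] C'N sc m1 by (simp add: m_def)
  have ne': "seg s' c 0 0 m \<noteq> []" by (simp add: seg_ne)
  have pd: "dpath (Dg N F U) (subcube v C) s t Pd"
    unfolding dpath_walk
  proof (intro conjI)
    show "Pd \<noteq> []" "hd Pd = s" by (simp_all add: Pd_def)
    show "last Pd = t" by (simp add: Pd_def)
    have dx: "distinct (seg s' c 0 0 m)" using seg_distinct[OF d, of 0 m 0 s'] cne by (simp add: m_def)
    have "s \<notin> set (seg s' c 0 0 m)"
    proof
      assume "s \<in> set (seg s' c 0 0 m)"
      from segs'[OF this] show False by simp
    qed
    moreover have "t \<notin> set (seg s' c 0 0 m)"
    proof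
      assume "t \<in> set (seg s' c 0 0 m)"
      from segs'[OF this] Nt show False by simp
    qed
    ultimately show "distinct Pd" unfolding Pd_def using dx st by (rule dist3)
    have "set (seg s' c 0 0 m) \<subseteq> subcube v C"
      using seg_sub[OF s'S, of c 0 m 0] sc cne by (simp add: m_def C'_def)
    then show "set Pd \<subseteq> subcube v C" using sS tS by (simp add: Pd_def)
    have "walk (Dg N F U) (seg s' c 0 0 m @ [t])"
      using walk_append[OF w' walk_single ne'] last' e2 by simp
    then have "walk (Dg N F U) ([s] @ (seg s' c 0 0 m @ [t]))"
      by (rule walk_append[OF walk_single]) (use hd' ne' e1 in auto)
    then show "walk (Dg N F U) Pd" by (simp add: Pd_def)
  qed
  show ?thesis
  proof (rule HKP_intro[of "card C" _ _ _ _ P])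
    fix i assume i: "i < card C"
    show "dpath (Dg N F U) (subcube v C) s t (P i)"
    proof (cases "i < m")
      case True
      then show ?thesis using rot_path[OF cx sS _ _ d, of i] sc C'N o'(2) t
        by (simp add: P_def m_def C'_def)
    next
      case False then show ?thesis using pd by (simp add: P_def)
    qed
  next
    fix i j assume ij: "i < card C" "j < card C" "i \<noteq> j"
    have dis: "set (seg s c i 0 m) \<inter> set Pd \<subseteq> {s, t}" if "i < m" for i
    proof
      fix y assume y: "y \<in> set (seg s c i 0 m) \<inter> set Pd"
      then have "N \<in> y \<longleftrightarrow> N \<in> s" using segs[OF that] by blast
      then have "y \<notin> set (seg s' c 0 0 m)" using segs' by (metis (full_types))
      then show "y \<in> {s, t}" using y by (auto simp: Pd_def)
    qed
    show "set (P i) \<inter> set (P j) \<subseteq> {s, t}"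
    proof (cases "i < m \<and> j < m")
      case True
      then show ?thesis using rot_disj[OF d, of i j s] ij t sc by (simp add: P_def m_def C'_def)
    next
      case False
      then show ?thesis using ij cC dis[of i] dis[of j] by (auto simp: P_def)
    qed
  next
    fix i j assume "i < card C" "j < card C" "i \<noteq> j"
    then show "3 \<le> length (P i) \<or> 3 \<le> length (P j)" using cC
      by (auto simp: P_def seg_len Pd_def)
  qed
qed


lemma upset_mono: "upset N U \<Longrightarrow> x \<in> U \<Longrightarrow> x \<subseteq> y \<Longrightarrow> y \<subseteq> {..<N} \<Longrightarrow> y \<in> U"
  unfolding upset_def by blast

lemma caseIII_m0:
  assumes v: "cube_vertex (Suc N) v" and C: "C \<subseteq> {..<Suc N}" and CN: "C = {N}"
    and sS: "s \<in> subcube v C"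
    and o: "\<forall>i\<in>C. outf N F U s i" and t: "t = flip s C"
  shows "HKP (Dg N F U) (subcube v C) s t (card C)"
proof -
  have cx: "cube_vertex (Suc N) s" using subcube_vertex[OF v C sS] .
  have e: "(s, t) \<in> Dg N F U" using Dg_edge cx o CN t by simp
  have st: "s \<noteq> t" using t CN by (auto simp: flip_def)
  have tS: "t \<in> subcube v C" using flip_in_subcube[OF sS] t by auto
  have "dpath (Dg N F U) (subcube v C) s t [s, t]"
    unfolding dpath_def using e st sS tS by auto
  moreover have "card C = 1" using CN by simp
  ultimately show ?thesis by (intro HKP_intro[where P="\<lambda>_. [s, t]"]) auto
qed

lemma seg_mem_iff:
  "y \<in> set (seg x c r a b @ seg x' c r b m) \<longleftrightarrow>
     (\<exists>k. a \<le> k \<and> k \<le> b \<and> y = flip x (rA c r k)) \<or> (\<exists>k. b \<le> k \<and> k \<le> m \<and> y = flip x' (rA c r k))"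
  by (simp add: seg_set)

lemma caseIII:
  assumes v: "cube_vertex (Suc N) v" and C: "C \<subseteq> {..<Suc N}" and NC: "N \<in> C"
    and sS: "s \<in> subcube v C"
    and o: "\<forall>i\<in>C. outf N F U s i" and t: "t = flip s C" and ot: "\<not> outf N F U t N"
    and up: "upset N U"
  shows "HKP (Dg N F U) (subcube v C) s t (card C)"
proof (cases "C = {N}")
  case True then show ?thesis using caseIII_m0[OF v C True sS o t] by simp
next
  case False
  define C' where "C' = C - {N}"
  define m where "m = card C'"
  have fC: "finite C" using C finite_subset by blast
  have fC': "finite C'" using fC by (simp add: C'_def)
  have C'N: "C' \<subseteq> {..<N}" using C by (auto simp: C'_def less_Suc_eq)
  have NC': "N \<notin> C'" by (simp add: C'_def)
  have cC: "card C = Suc m" using card_Suc_Diff1[OF fC NC] by (simp add: C'_def m_def)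
  have m1: "1 \<le> m"
  proof (rule ccontr)
    assume "\<not> 1 \<le> m"
    then have "card C' = 0" by (simp add: m_def)
    then have "C' = {}" using fC' by simp
    then show False using False NC unfolding C'_def by blast
  qed
  have cx: "cube_vertex (Suc N) s" using subcube_vertex[OF v C sS] .
  define s' where "s' = flip s {N}"
  have s'S: "s' \<in> subcube v C" using flip_in_subcube[OF sS] NC by (simp add: s'_def)
  have cs': "cube_vertex (Suc N) s'" using subcube_vertex[OF v C s'S] .
  have tS: "t \<in> subcube v C" using flip_in_subcube[OF sS] t by auto
  have osC': "\<forall>i\<in>C'. outf N F U s i" using o by (simp add: C'_def)
  have os'C': "\<forall>i\<in>C'. outf N F U s' i"
  proof
    fix i assume i: "i \<in> C'"
    then have "i < N" using C'N by auto
    then have "outf N F U s' i = outf N F U s i" by (simp add: s'_def outf_lt mem_flip)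
    then show "outf N F U s' i" using osC' i by simp
  qed
  have osN: "outf N F U s N" using o NC by simp
  define G where "G X = outf N F U (flip s X) N" for X
  have sw_edge: "(flip s X, flip s' X) \<in> Dg N F U" if "X \<subseteq> C'" "G X" for X
  proof -
    have "flip s' X = flip (flip s X) {N}" using that NC' by (auto simp: s'_def flip_def)
    moreover have "X \<subseteq> {..<Suc N}" using that C'N by auto
    then have "cube_vertex (Suc N) (flip s X)" using cube_vertex_flip[OF cx] by blast
    ultimately show ?thesis using Dg_edge that(2) by (simp add: G_def)
  qed
  have G0: "G {}" using osN by (simp add: G_def flip_empty)
  have tt: "t = flip (flip s C') {N}" using t NC by (auto simp: C'_def flip_def)
  have GC': "G C'" using ot outf_flip[of N N F U "flip s C'"] tt by (simp add: G_def)
  define s0 where "s0 = s - {N}"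
  have s0N: "s0 \<subseteq> {..<N}" using cx by (auto simp: s0_def cube_vertex_def less_Suc_eq)
  have Gc: "G X \<longleftrightarrow> (flip s0 X \<in> U \<longleftrightarrow> s0 \<in> U)" if "X \<subseteq> C'" for X
  proof -
    have e: "flip s X - {N} = flip s0 X" using that NC' by (auto simp: flip_def s0_def)
    have n: "N \<in> flip s X \<longleftrightarrow> N \<in> s" using that NC' by (auto simp: mem_flip)
    show ?thesis using osN e n by (auto simp: G_def outf_def s0_def)
  qed
  have fsub: "flip s0 X \<subseteq> {..<N}" if "X \<subseteq> C'" for X using that s0N C'N by (auto simp: flip_def)
  define Q0 where "Q0 = (if s0 \<in> U then {i\<in>C'. i \<notin> s0} else {i\<in>C'. i \<in> s0})"
  define P0 where "P0 = C' - Q0"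
  have Q0C: "Q0 \<subseteq> C'" by (auto simp: Q0_def)
  have g1: "G {i}" if "i \<in> Q0" for i
  proof (cases "s0 \<in> U")
    case True
    then have "i \<notin> s0" "i \<in> C'" using that by (auto simp: Q0_def)
    then have "s0 \<subseteq> flip s0 {i}" by (auto simp: flip_def)
    then have "flip s0 {i} \<in> U" using upset_mono[OF up True] fsub[of "{i}"] \<open>i \<in> C'\<close> by auto
    then show ?thesis using Gc[of "{i}"] True \<open>i \<in> C'\<close> by auto
  next
    case False
    then have "i \<in> s0" "i \<in> C'" using that by (auto simp: Q0_def)
    then have "flip s0 {i} \<subseteq> s0" by (auto simp: flip_def)
    then have "flip s0 {i} \<notin> U" using upset_mono[OF up _ _ s0N] False by blast
    then show ?thesis using Gc[of "{i}"] False \<open>i \<in> C'\<close> by auto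
  qed
  have g2: "G (C' - {i})" if "i \<in> P0" for i
  proof -
    have iC: "i \<in> C'" using that by (simp add: P0_def)
    have GC'': "flip s0 C' \<in> U \<longleftrightarrow> s0 \<in> U" using GC' Gc[of C'] by simp
    show ?thesis
    proof (cases "s0 \<in> U")
      case True
      then have "i \<in> s0" using that by (auto simp: P0_def Q0_def)
      then have "flip s0 C' \<subseteq> flip s0 (C' - {i})" by (auto simp: flip_def)
      then have "flip s0 (C' - {i}) \<in> U" using upset_mono[OF up _ _ fsub[of "C' - {i}"]] GC'' True by auto
      then show ?thesis using Gc[of "C' - {i}"] True by auto
    next
      case False
      then have "i \<notin> s0" using that by (auto simp: P0_def Q0_def)
      then have "flip s0 (C' - {i}) \<subseteq> flip s0 C'" by (auto simp: flip_def)
      then have "flip s0 (C' - {i}) \<notin> U" using upset_mono[OF up _ _ fsub[of C']] GC'' False by blast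
      then show ?thesis using Gc[of "C' - {i}"] False by auto
    qed
  qed
  define pl where "pl = sorted_list_of_set P0"
  define ql where "ql = sorted_list_of_set Q0"
  define c where "c = pl @ ql"
  have fP0: "finite P0" "finite Q0" using fC' Q0C finite_subset by (auto simp: P0_def)
  have sc: "set c = C'" using fP0 Q0C by (auto simp: c_def pl_def ql_def P0_def)
  have d: "distinct c" using fP0 by (auto simp: c_def pl_def ql_def P0_def)
  have lc: "length c = m" using distinct_card[OF d] sc by (simp add: m_def)
  have cne: "c \<noteq> []" using lc m1 by auto
  have setpl: "set pl = P0" and setql: "set ql = Q0" using fP0 by (auto simp: pl_def ql_def)
  define jj where "jj r = (if c ! r \<in> Q0 then 1 else m - 1)" for r
  have good: "G (rA c r (jj r)) \<and> 1 \<le> jj r \<and> jj r < m" if r: "0 < r" "r < m" for r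
  proof (cases "c ! r \<in> Q0")
    case True
    then show ?thesis using g1 rA_one[of r c] r lc by (simp add: jj_def)
  next
    case False
    have crC: "c ! r \<in> C'" using sc r lc nth_mem by metis
    have rpl: "r < length pl"
    proof (rule ccontr)
      assume "\<not> r < length pl"
      then have "c ! r = ql ! (r - length pl)" by (simp add: c_def nth_append)
      moreover have "r - length pl < length ql" using r lc \<open>\<not> r < length pl\<close> by (simp add: c_def)
      ultimately have "c ! r \<in> Q0" using setql nth_mem by metis
      then show False using False by simp
    qed
    then have r1: "r - 1 < length pl" by simp
    then have "c ! (r - 1) = pl ! (r - 1)" by (simp add: c_def nth_append)
    then have "c ! (r - 1) \<in> P0" using setpl r1 nth_mem by metis
    then have "G (C' - {c ! (r - 1)})" using g2 by simp
    moreover have "rA c r (m - 1) = C' - {c ! (r - 1)}" using rA_m1[OF d r(1)] r lc sc by simp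
    ultimately show ?thesis using False r by (simp add: jj_def)
  qed
  define rr where "rr i = (if i = m then 0 else i)" for i
  define jf where "jf i = (if i = m then m else if i = 0 then 0 else jj i)" for i
  have rr_lt: "rr i < m" if "i \<le> m" for i using that m1 by (auto simp: rr_def)
  have jf_le: "jf i \<le> m" if "i \<le> m" for i using that good[of i] by (auto simp: jf_def)
  have jfG: "G (rA c (rr i) (jf i))" if im: "i \<le> m" for i
  proof -
    consider "i = m" | "i = 0" "i \<noteq> m" | "0 < i" "i < m" using im by force
    then show ?thesis
    proof cases
      case 1 then show ?thesis using rA_full[OF d, of 0] lc m1 sc GC' by (simp add: rr_def jf_def)
    next
      case 2 then show ?thesis using G0 rA_0 by (simp add: rr_def jf_def)
    next
      case 3 then show ?thesis using good[of i] by (simp add: rr_def jf_def)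
    qed
  qed
  have jf0: "i = 0" if "i \<le> m" "jf i = 0" for i using that good[of i] m1 by (auto simp: jf_def split: if_splits)
  have jfm: "i = m" if "i \<le> m" "jf i = m" for i using that good[of i] m1 by (auto simp: jf_def split: if_splits)
  have rreq: "(jf i = 0 \<and> jf j = m) \<or> (jf i = m \<and> jf j = 0)"
    if "i \<le> m" "j \<le> m" "i \<noteq> j" "rr i = rr j" for i j
    using that by (auto simp: rr_def jf_def)
  define P where "P i = seg s c (rr i) 0 (jf i) @ seg s' c (rr i) (jf i) m" for i
  have fs't: "flip s' C' = t" using t NC by (auto simp: s'_def C'_def flip_def)
  have Nc: "N \<notin> set c" using sc NC' by simp
  have csub: "set c \<subseteq> {..<N}" "set c \<subseteq> C" using sc C'N by (auto simp: C'_def)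
  show ?thesis
  proof (rule HKP_intro[of "card C" _ _ _ _ P])
    fix i assume "i < card C"
    then have i: "i \<le> m" using cC by simp
    let ?r = "rr i" and ?j = "jf i"
    have r: "?r < length c" using rr_lt[OF i] lc by simp
    have j: "?j \<le> length c" using jf_le[OF i] lc by simp
    have X1: "seg s c ?r 0 ?j \<noteq> []" "seg s' c ?r ?j m \<noteq> []" using jf_le[OF i] by (simp_all add: seg_ne)
    have h1: "hd (seg s c ?r 0 ?j) = s" using seg_hd[of 0 ?j s c ?r] rA_0 flip_empty by simp
    have l2: "last (seg s' c ?r ?j m) = t"
      using seg_last[of ?j m s' c ?r] jf_le[OF i] rA_full[OF d r] sc fs't by (simp add: lc)
    have l1: "last (seg s c ?r 0 ?j) = flip s (rA c ?r ?j)" using seg_last by simp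
    have h2: "hd (seg s' c ?r ?j m) = flip s' (rA c ?r ?j)" using seg_hd jf_le[OF i] by simp
    have d1: "distinct (seg s c ?r 0 ?j)" using seg_distinct[OF d, of ?r ?j 0 s] r j by simp
    have d2: "distinct (seg s' c ?r ?j m)" using seg_distinct[OF d, of ?r m ?j s'] r lc by simp
    have Ns': "N \<in> s' \<longleftrightarrow> N \<notin> s" by (simp add: s'_def mem_flip)
    have dj: "set (seg s c ?r 0 ?j) \<inter> set (seg s' c ?r ?j m) = {}"
    proof (rule ccontr)
      assume "set (seg s c ?r 0 ?j) \<inter> set (seg s' c ?r ?j m) \<noteq> {}"
      then obtain y where y: "y \<in> set (seg s c ?r 0 ?j)" "y \<in> set (seg s' c ?r ?j m)" by blast
      have "N \<in> y \<longleftrightarrow> N \<in> s" using seg_N[OF Nc r j y(1)] .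
      moreover have "N \<in> y \<longleftrightarrow> N \<in> s'" using seg_N[OF Nc r _ y(2)] lc by simp
      ultimately show False using Ns' by simp
    qed
    have sub1: "set (seg s c ?r 0 ?j) \<subseteq> subcube v C" using seg_sub[OF sS csub(2) r j] .
    have sub2: "set (seg s' c ?r ?j m) \<subseteq> subcube v C" using seg_sub[OF s'S csub(2) r, of m] lc by simp
    have w1: "walk (Dg N F U) (seg s c ?r 0 ?j)"
      using seg_walk[OF cx csub(1) d _ j] r osC' sc by simp
    have w2: "walk (Dg N F U) (seg s' c ?r ?j m)"
      using seg_walk[OF cs' csub(1) d, of ?r m ?j] r os'C' sc lc by simp
    have je: "(last (seg s c ?r 0 ?j), hd (seg s' c ?r ?j m)) \<in> Dg N F U"
      using l1 h2 sw_edge[of "rA c ?r ?j"] jfG[OF i] rA_sub[OF r j] sc by simp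
    show "dpath (Dg N F U) (subcube v C) s t (P i)"
      unfolding dpath_walk P_def
      using X1 h1 l2 d1 d2 dj sub1 sub2 walk_append[OF w1 w2 X1 je] by simp
  next
    fix i j assume ij: "i < card C" "j < card C" "i \<noteq> j"
    then have i: "i \<le> m" and j: "j \<le> m" using cC by auto
    show "set (P i) \<inter> set (P j) \<subseteq> {s, t}"
    proof
      fix y assume y: "y \<in> set (P i) \<inter> set (P j)"
      have ri: "rr i < length c" and rj: "rr j < length c" using rr_lt i j lc by auto
      have Ns': "N \<in> s' \<longleftrightarrow> N \<notin> s" by (simp add: s'_def mem_flip)
      have cardA: "card (rA c (rr i) k) = k" if "k \<le> m" for k using rA_card[OF d ri] that lc by simp
      have cardB: "card (rA c (rr j) k) = k" if "k \<le> m" for k using rA_card[OF d rj] that lc by simp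
      have NA: "N \<notin> rA c r k" if "r < length c" "k \<le> m" for r k
      proof -
        have "rA c r k \<subseteq> set c" using rA_sub[OF that(1), of k] that(2) lc by simp
        then show ?thesis using Nc by blast
      qed
      have yi0: "(\<exists>k. k \<le> jf i \<and> y = flip s (rA c (rr i) k)) \<or> (\<exists>k. jf i \<le> k \<and> k \<le> m \<and> y = flip s' (rA c (rr i) k))"
        using y seg_mem_iff[of y s c "rr i" 0 "jf i" s' m] by (simp add: P_def)
      have yj0: "(\<exists>k. k \<le> jf j \<and> y = flip s (rA c (rr j) k)) \<or> (\<exists>k. jf j \<le> k \<and> k \<le> m \<and> y = flip s' (rA c (rr j) k))"
        using y seg_mem_iff[of y s c "rr j" 0 "jf j" s' m] by (simp add: P_def)
      from yi0 yj0 obtain k k' where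
        yi: "(k \<le> jf i \<and> y = flip s (rA c (rr i) k)) \<or> (jf i \<le> k \<and> k \<le> m \<and> y = flip s' (rA c (rr i) k))"
        and yj: "(k' \<le> jf j \<and> y = flip s (rA c (rr j) k')) \<or> (jf j \<le> k' \<and> k' \<le> m \<and> y = flip s' (rA c (rr j) k'))"
        by blast
      have kk: "k \<le> m" "k' \<le> m" using yi yj jf_le[OF i] jf_le[OF j] by auto
      consider (ss) "k \<le> jf i" "y = flip s (rA c (rr i) k)" "k' \<le> jf j" "y = flip s (rA c (rr j) k')"
        | (tt) "jf i \<le> k" "y = flip s' (rA c (rr i) k)" "jf j \<le> k'" "y = flip s' (rA c (rr j) k')"
        | (mix) "y = flip s (rA c (rr i) k)" "y = flip s' (rA c (rr j) k')"
        | (mix2) "y = flip s' (rA c (rr i) k)" "y = flip s (rA c (rr j) k')"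
        using yi yj by blast
      then show "y \<in> {s, t}"
      proof cases
        case ss
        then have AA: "rA c (rr i) k = rA c (rr j) k'" by (simp add: flip_eq_iff)
        then have "k = k'" using cardA[OF kk(1)] cardB[OF kk(2)] by simp
        have "k = 0"
        proof (rule ccontr)
          assume k0: "k \<noteq> 0"
          show False
          proof (cases "rr i = rr j")
            case True
            then show False using rreq[OF i j ij(3) True] ss \<open>k = k'\<close> k0 by auto
          next
            case False
            then have "k = 0 \<or> k = length c" using rA_disj[OF d ri rj False _ _ AA] kk lc by simp
            then have "k = m" using k0 lc by simp
            then have "jf i = m" "jf j = m" using ss \<open>k = k'\<close> jf_le[OF i] jf_le[OF j] by auto
            then show False using jfm[OF i] jfm[OF j] ij(3) by simp
          qed
        qed
        then show ?thesis using ss rA_0 flip_empty by simp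
      next
        case tt
        then have AA: "rA c (rr i) k = rA c (rr j) k'" by (simp add: flip_eq_iff)
        then have "k = k'" using cardA[OF kk(1)] cardB[OF kk(2)] by simp
        have "k = m"
        proof (rule ccontr)
          assume km: "k \<noteq> m"
          show False
          proof (cases "rr i = rr j")
            case True
            then show False using rreq[OF i j ij(3) True] tt \<open>k = k'\<close> km kk by auto
          next
            case False
            then have "k = 0 \<or> k = length c" using rA_disj[OF d ri rj False _ _ AA] kk lc by simp
            then have "k = 0" using km lc by simp
            then have "jf i = 0" "jf j = 0" using tt \<open>k = k'\<close> by auto
            then show False using jf0[OF i] jf0[OF j] ij(3) by simp
          qed
        qed
        then show ?thesis using tt rA_full[OF d ri] lc sc fs't by simp
      next
        case mix
        have "N \<in> y \<longleftrightarrow> N \<in> s" using mix(1) NA[OF ri kk(1)] by (simp add: mem_flip)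
        moreover have "N \<in> y \<longleftrightarrow> N \<in> s'" using mix(2) NA[OF rj kk(2)] by (simp add: mem_flip)
        ultimately show ?thesis using Ns' by simp
      next
        case mix2
        have "N \<in> y \<longleftrightarrow> N \<in> s'" using mix2(1) NA[OF ri kk(1)] by (simp add: mem_flip)
        moreover have "N \<in> y \<longleftrightarrow> N \<in> s" using mix2(2) NA[OF rj kk(2)] by (simp add: mem_flip)
        ultimately show ?thesis using Ns' by simp
      qed
    qed
  next
    fix i j assume "i < card C" "j < card C" "i \<noteq> j"
    then have "i \<le> m" using cC by simp
    then have "jf i \<le> m" using jf_le by simp
    then show "3 \<le> length (P i) \<or> 3 \<le> length (P j)" using m1
      by (simp add: P_def seg_len)
  qed
qed




lemma hk_Dg:
  assumes up: "upset N U"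
  shows "holt_klee (Suc N) (Dg N F U)"
  unfolding holt_klee_def
proof (intro conjI USO_Dg allI impI)
  fix v C s t
  assume v: "cube_vertex (Suc N) v" and C: "C \<subseteq> {..<Suc N}"
    and src: "is_source (Dg N F U) (subcube v C) s" and snk: "is_sink (Dg N F U) (subcube v C) t"
  have sS: "s \<in> subcube v C" and o: "\<forall>i\<in>C. outf N F U s i" using src source_iff[OF v C] by auto
  have tS: "t \<in> subcube v C" and ot: "\<forall>i\<in>C. \<not> outf N F U t i" using snk sink_iff[OF v C] by auto
  have ag: "x \<in> t \<longleftrightarrow> x \<in> flip s C" if "x \<noteq> N" for x
  proof (cases "x \<in> C")
    case True
    then have "x < N" using C that by auto
    moreover have "outf N F U s x" "\<not> outf N F U t x" using o ot True by auto
    ultimately show ?thesis using True by (simp add: outf_lt mem_flip)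
  next
    case False
    then show ?thesis using sS tS by (simp add: subcube_iff mem_flip)
  qed
  have "HKP (Dg N F U) (subcube v C) s t (card C)"
  proof (cases "N \<in> C")
    case False
    have "N \<in> t \<longleftrightarrow> N \<in> flip s C" using False sS tS by (simp add: subcube_iff mem_flip)
    then have "t = flip s C" using ag by (intro set_eqI) metis
    moreover have "C \<subseteq> {..<N}" using C False by (auto simp: less_Suc_eq)
    ultimately show ?thesis using caseI[OF v _ sS] o by blast
  next
    case NC: True
    have otN: "\<not> outf N F U t N" using ot NC by simp
    show ?thesis
    proof (cases "N \<in> t \<longleftrightarrow> N \<in> s")
      case True
      have "x \<in> t \<longleftrightarrow> x \<in> flip s (C - {N})" for x
        using ag[of x] True by (cases "x = N") (auto simp: mem_flip)
      then have "t = flip s (C - {N})" by blast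
      then show ?thesis using caseII[OF v C NC sS o _ otN] by blast
    next
      case False
      have "x \<in> t \<longleftrightarrow> x \<in> flip s C" for x
        using ag[of x] False NC by (cases "x = N") (auto simp: mem_flip)
      then have "t = flip s C" by blast
      then show ?thesis using caseIII[OF v C NC sS o _ otN up] by blast
    qed
  qed
  then show "\<exists>P. (\<forall>i<card C. dpath (Dg N F U) (subcube v C) s t (P i)) \<and>
            inj_on P {..<card C} \<and>
            (\<forall>i<card C. \<forall>j<card C. i \<noteq> j \<longrightarrow> set (P i) \<inter> set (P j) \<subseteq> {s, t})"
    unfolding HKP_def .
qed

lemma good_Dg:
  assumes up: "upset N U"
  shows "USO (Suc N) (Dg N {} U) \<and> acyclic (Dg N {} U) \<and> locally_uniform (Suc N) (Dg N {} U)
    \<and> strongly_holt_klee (Suc N) (Dg N {} U)"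
  using USO_Dg acyclic_Dg lu_Dg[OF up] hk_Dg[OF up] reorient_Dg
  unfolding strongly_holt_klee_def by metis




theorem mainTheorem4:
  fixes n :: nat
  assumes "n \<ge> 2"
  shows "card {D. USO n D \<and> acyclic D \<and> locally_uniform n D \<and> strongly_holt_klee n D}
           \<ge> 2 ^ ((n - 1) choose ((n - 1) div 2))"
proof -
  obtain N where nN: "n = Suc N" using assms by (cases n) auto
  define k where "k = N div 2"
  define M where "M = {x. x \<subseteq> {..<N} \<and> card x = k}"
  define UA where "UA A = {x. x \<subseteq> {..<N} \<and> k < card x} \<union> A" for A
  define G where "G = {D. USO n D \<and> acyclic D \<and> locally_uniform n D \<and> strongly_holt_klee n D}"
  have up: "upset N (UA A)" if A: "A \<subseteq> M" for A
    unfolding upset_def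
  proof (intro allI impI)
    fix x y assume x: "x \<in> UA A" and xy: "x \<subseteq> y" and y: "y \<subseteq> {..<N}"
    have fy: "finite y" using y finite_subset by blast
    show "y \<in> UA A"
    proof (cases "k < card x")
      case True
      then have "k < card y" using card_mono[OF fy xy] by simp
      then show ?thesis using y by (simp add: UA_def)
    next
      case False
      then have xA: "x \<in> A" using x by (simp add: UA_def)
      then have ck: "card x = k" using A by (auto simp: M_def)
      show ?thesis
      proof (cases "x = y")
        case True then show ?thesis using xA by (simp add: UA_def)
      next
        case False
        then have "x \<subset> y" using xy by auto
        then have "card x < card y" using psubset_card_mono[OF fy] by simp
        then show ?thesis using y ck by (simp add: UA_def)
      qed
    qed
  qed
  have sub: "(\<lambda>A. Dg N {} (UA A)) ` Pow M \<subseteq> G"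
    using good_Dg up nN by (auto simp: G_def)
  have inj: "inj_on (\<lambda>A. Dg N {} (UA A)) (Pow M)"
  proof (rule inj_onI, rule ccontr)
    fix A1 A2 assume A1: "A1 \<in> Pow M" and A2: "A2 \<in> Pow M" and e: "Dg N {} (UA A1) = Dg N {} (UA A2)"
      and ne: "A1 \<noteq> A2"
    have key: "(x, flip x {N}) \<in> Dg N {} (UA A) \<longleftrightarrow> x \<in> A" if "x \<in> M" "A \<subseteq> M" for x A
    proof -
      have xN: "x \<subseteq> {..<N}" "card x = k" using that by (auto simp: M_def)
      have cv: "cube_vertex (Suc N) x" using xN by (auto simp: cube_vertex_def)
      have "N \<notin> x" using xN by auto
      then have "x - {N} = x" by simp
      then have "outf N {} (UA A) x N = (x \<in> UA A)" using \<open>N \<notin> x\<close> by (simp add: outf_def)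
      moreover have "x \<in> UA A \<longleftrightarrow> x \<in> A" using xN by (auto simp: UA_def)
      ultimately show ?thesis using Dg_edge cv by simp
    qed
    obtain x where x: "x \<in> M" "(x \<in> A1) \<noteq> (x \<in> A2)" using A1 A2 ne by auto
    then show False using key[of x A1] key[of x A2] A1 A2 e by auto
  qed
  have finG: "finite G"
  proof (rule finite_subset)
    show "G \<subseteq> Pow (Pow {..<n} \<times> Pow {..<n})"
    proof
      fix D assume "D \<in> G"
      then have "orientation n D" by (simp add: G_def USO_def)
      then have "D \<subseteq> {(u, v). cube_edge n u v}" by (simp add: orientation_def)
      moreover have "cube_edge n u v \<Longrightarrow> u \<subseteq> {..<n} \<and> v \<subseteq> {..<n}" for u v
        by (auto simp: cube_edge_def cube_vertex_def flip_def)
      ultimately show "D \<in> Pow (Pow {..<n} \<times> Pow {..<n})" by fastforce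
    qed
  qed simp
  have cM: "card M = N choose k"
    using n_subsets[of "{..<N}" k] by (simp add: M_def)
  have fM: "finite M" by (simp add: M_def)
  have "2 ^ (N choose k) = card (Pow M)"
    using cM fM by (simp add: card_Pow)
  also have "\<dots> = card ((\<lambda>A. Dg N {} (UA A)) ` Pow M)" using card_image[OF inj] by simp
  also have "\<dots> \<le> card G" using card_mono[OF finG sub] .
  finally show ?thesis using nN by (simp add: G_def k_def)
qed



end
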